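(* Let $0<\mu<L_{\max}^{-1}$ with $L_{\max}=\max_i\|A_i\|_2^2$, and let $\{x^n\}$ be generated by GAITA (as in the context) from any $x^0\in\mathbf{R}^N$. For $n\in\mathbf{N}$ let $i=(n\bmod N)+1$ and $\Delta(x^n,x^{n+1})=T_\lambda(x^n)-T_\lambda(x^{n+1})$. Then $\Delta(x^n,x^{n+1})=0$ if and only if $x_i^{n+1}=x_i^n$.
   Context: Let $A\in\mathbf{R}^{m\times N}$ have columns $A_1,\dots,A_N$, $y\in\mathbf{R}^m$, $\lambda>0$, $q\in(0,1)$, and $T_\lambda(x)=\frac12\|Ax-y\|_2^2+\lambda\sum_{i=1}^N|x_i|^q$. For a step size $\mu>0$ set $\tau_{\mu,q}=\frac{2-q}{2-2q}(2\lambda\mu(1-q))^{\frac{1}{2-q}}$ and $\eta_{\mu,q}=(2\lambda\mu(1-q))^{\frac{1}{2-q}}$. For $z\in\mathbf{R}$ let $prox_{\mu,\lambda|\cdot|^q}(z)=\arg\min_{v\in\mathbf{R}}\{\frac{(z-v)^2}{2\mu}+\lambda|v|^q\}$ (a single point when $|z|\neq\tau_{\mu,q}$). Define $\mathcal{T}(z,w)$ as the unique element of $prox_{\mu,\lambda|\cdot|^q}(z)$ if $|z|\neq\tau_{\mu,q}$, and, if $|z|=\tau_{\mu,q}$, as $sgn(z)\eta_{\mu,q}$ when $w\neq0$ and $0$ when $w=0$ ($sgn(0)=0$). GAITA: given $x^0\in\mathbf{R}^N$, for $n=0,1,2,\dots$ let $i=(n\bmod N)+1$, $z_i^n=x_i^n-\mu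 A_i^T(Ax^n-y)$, $x_i^{n+1}=\mathcal{T}(z_i^n,x_i^n)$, $x_j^{n+1}=x_j^n$ for $j\neq i$. *)

theory Defs
  imports Complex_Main
begin

(* Conventions: vectors in R^N are functions nat => real, only indices 0..N-1 matter;
   the matrix A in R^{m x N} is nat => nat => real, entry A r j for r < m, j < N.
   Paper index i = (n mod N) + 1 corresponds to 0-based index n mod N here. *)

definition Amul :: "(nat \<Rightarrow> nat \<Rightarrow> real) \<Rightarrow> nat \<Rightarrow> nat \<Rightarrow> (nat \<Rightarrow> real) \<Rightarrow> nat \<Rightarrow> real" where
  "Amul A m N x = (\<lambda>r. \<Sum>j<N. A r j * x j)"

definition Tlam :: "(nat \<Rightarrow> nat \<Rightarrow> real) \<Rightarrow> (nat \<Rightarrow> real) \<Rightarrow> real \<Rightarrow> real \<Rightarrow> nat \<Rightarrow> nat \<Rightarrow> (nat \<Rightarrow> real) \<Rightarrow> real" where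
  "Tlam A y lam q m N x =
     (1/2) * (\<Sum>r<m. (Amul A m N x r - y r)^2) + lam * (\<Sum>j<N. \<bar>x j\<bar> powr q)"

definition colnorm2 :: "(nat \<Rightarrow> nat \<Rightarrow> real) \<Rightarrow> nat \<Rightarrow> nat \<Rightarrow> real" where
  "colnorm2 A m i = (\<Sum>r<m. (A r i)^2)"

definition Lmax :: "(nat \<Rightarrow> nat \<Rightarrow> real) \<Rightarrow> nat \<Rightarrow> nat \<Rightarrow> real" where
  "Lmax A m N = Max ((\<lambda>i. colnorm2 A m i) ` {..<N})"

definition tau :: "real \<Rightarrow> real \<Rightarrow> real \<Rightarrow> real" where
  "tau mu lam q = (2 - q) / (2 - 2*q) * (2*lam*mu*(1 - q)) powr (1 / (2 - q))"

definition eta :: "real \<Rightarrow> real \<Rightarrow> real \<Rightarrow> real" where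
  "eta mu lam q = (2*lam*mu*(1 - q)) powr (1 / (2 - q))"

definition prox :: "real \<Rightarrow> real \<Rightarrow> real \<Rightarrow> real \<Rightarrow> real set" where
  "prox mu lam q z = {v. \<forall>w. (z - v)^2 / (2*mu) + lam * \<bar>v\<bar> powr q
                              \<le> (z - w)^2 / (2*mu) + lam * \<bar>w\<bar> powr q}"

definition Tmap :: "real \<Rightarrow> real \<Rightarrow> real \<Rightarrow> real \<Rightarrow> real \<Rightarrow> real" where
  "Tmap mu lam q z w =
     (if \<bar>z\<bar> \<noteq> tau mu lam q then (THE v. v \<in> prox mu lam q z)
      else if w \<noteq> 0 then sgn z * eta mu lam q else 0)"

definition gradc :: "(nat \<Rightarrow> nat \<Rightarrow> real) \<Rightarrow> (nat \<Rightarrow> real) \<Rightarrow> nat \<Rightarrow> nat \<Rightarrow> (nat \<Rightarrow> real) \<Rightarrow> nat \<Rightarrow> real" where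
  "gradc A y m N x i = (\<Sum>r<m. A r i * (Amul A m N x r - y r))"

primrec gaita :: "(nat \<Rightarrow> nat \<Rightarrow> real) \<Rightarrow> (nat \<Rightarrow> real) \<Rightarrow> real \<Rightarrow> real \<Rightarrow> real \<Rightarrow> nat \<Rightarrow> nat
                   \<Rightarrow> (nat \<Rightarrow> real) \<Rightarrow> nat \<Rightarrow> (nat \<Rightarrow> real)" where
  "gaita A y lam q mu m N x0 0 = x0"
| "gaita A y lam q mu m N x0 (Suc n) =
     (let x = gaita A y lam q mu m N x0 n; i = n mod N;
          z = x i - mu * gradc A y m N x i
      in x(i := Tmap mu lam q z (x i)))"

end

theory Submission imports Defs begin

lemma e_facts:
  fixes c q :: real
  assumes c: "c > 0" and q: "0 < q" "q < 1"
  defines "e \<equiv> (2*c*(1-q)) powr (1/(2-q))"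
  shows "e > 0" "e powr (2-q) = 2*c*(1-q)" "e powr (q-1) = e / (2*c*(1-q))"
    "e powr (q-2) = 1 / (2*c*(1-q))"
proof -
  have a: "2*c*(1-q) > 0" using c q by auto
  show "e > 0" unfolding e_def using a c q by simp
  show p: "e powr (2-q) = 2*c*(1-q)" unfolding e_def using a q
    by (simp add: powr_powr)
  have "e powr (q-1) = e powr (1 - (2-q))" by simp
  also have "\<dots> = e powr 1 / e powr (2-q)" by (rule powr_diff)
  finally show "e powr (q-1) = e / (2*c*(1-q))" using p \<open>e > 0\<close> by simp
  have "e powr (q-2) = e powr 0 / e powr (2-q)" using powr_diff[of e 0 "2-q"] by simp
  then show "e powr (q-2) = 1 / (2*c*(1-q))" using p \<open>e > 0\<close> by simp
qed

lemma psi_eq: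
  fixes c q :: real
  assumes c: "c > 0" and q: "0 < q" "q < 1"
  defines "e \<equiv> (2*c*(1-q)) powr (1/(2-q))"
  shows "e/2 + c * e powr (q-1) = (2-q)/(2-2*q) * e"
proof -
  note f = e_facts[OF c q, folded e_def]
  have "c * e powr (q-1) = e / (2*(1-q))" using f(3) c q by (simp add: field_simps)
  moreover have "e/2 + e / (2*(1-q)) = (2-q)/(2-2*q) * e" using q by (simp add: field_simps)
  ultimately show ?thesis by simp
qed

lemma psi_ge:
  fixes c q w :: real
  assumes c: "c > 0" and q: "0 < q" "q < 1" and w: "w > 0"
  defines "e \<equiv> (2*c*(1-q)) powr (1/(2-q))"
  shows "w/2 + c * w powr (q-1) \<ge> (2-q)/(2-2*q) * e"
proof -
  note f = e_facts[OF c q, folded e_def]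
  define psi where "psi = (\<lambda>x::real. x/2 + c * x powr (q-1))"
  have d: "DERIV psi x :> 1/2 + c * ((q-1) * x powr (q-1-1))" if "x > 0" for x
    unfolding psi_def using that
    by (auto intro!: derivative_eq_intros)
  have "psi e \<le> psi w"
  proof (cases "w \<le> e")
    case True
    have "psi e \<le> psi w"
    proof (rule DERIV_nonpos_imp_nonincreasing[of w e psi, OF True])
      fix x assume x: "w \<le> x" "x \<le> e"
      have xp: "x > 0" using x w by auto
      have "x powr (q-2) \<ge> e powr (q-2)" using powr_mono2'[of "q-2" x e] x xp q by auto
      hence "x powr (q-2) \<ge> 1 / (2*c*(1-q))" using f(4) by simp
      hence "c*(1-q) * x powr (q-2) \<ge> c*(1-q) * (1 / (2*c*(1-q)))"
        using c q by (intro mult_left_mono) auto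
      hence "c*(1-q) * x powr (q-2) \<ge> 1/2" using c q by simp
      hence "1/2 + c * ((q-1) * x powr (q-1-1)) \<le> 0" by (simp add: algebra_simps)
      thus "\<exists>y. DERIV psi x :> y \<and> y \<le> 0" using d[OF xp] by blast
    qed
    thus ?thesis .
  next
    case False
    show "psi e \<le> psi w"
    proof (rule DERIV_nonneg_imp_nondecreasing[of e w psi])
      show "e \<le> w" using False by simp
      fix x assume x: "e \<le> x" "x \<le> w"
      have xp: "x > 0" using x f(1) by auto
      have "x powr (q-2) \<le> e powr (q-2)" using powr_mono2'[of "q-2" e x] x f(1) q by auto
      hence "x powr (q-2) \<le> 1 / (2*c*(1-q))" using f(4) by simp
      hence "c*(1-q) * x powr (q-2) \<le> c*(1-q) * (1 / (2*c*(1-q)))"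
        using c q by (intro mult_left_mono) auto
      hence "c*(1-q) * x powr (q-2) \<le> 1/2" using c q by simp
      hence "1/2 + c * ((q-1) * x powr (q-1-1)) \<ge> 0" by (simp add: algebra_simps)
      thus "\<exists>y. DERIV psi x :> y \<and> y \<ge> 0" using d[OF xp] by blast
    qed
  qed
  thus ?thesis using psi_eq[OF c q] unfolding psi_def e_def by simp
qed

definition Fq :: "real \<Rightarrow> real \<Rightarrow> real \<Rightarrow> real \<Rightarrow> real" where
  "Fq c q z w = (z-w)^2/2 + c * \<bar>w\<bar> powr q"

lemma Fq_diff_eq: "Fq c q z v - Fq c q z 0 = v^2/2 - z*v + c * \<bar>v\<bar> powr q"
proof -
  show ?thesis unfolding Fq_def by (simp add: power2_diff diff_divide_distrib add_divide_distrib)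
qed

lemma Fq_diff_ge:
  fixes c q z w :: real
  assumes c: "c > 0" and q: "0 < q" "q < 1" and w: "w \<noteq> 0"
  defines "e \<equiv> (2*c*(1-q)) powr (1/(2-q))"
  shows "Fq c q z w - Fq c q z 0 \<ge> \<bar>w\<bar> * ((2-q)/(2-2*q) * e - \<bar>z\<bar>)"
proof -
  have aw: "\<bar>w\<bar> > 0" using w by simp
  have pw: "\<bar>w\<bar> powr q = \<bar>w\<bar> * \<bar>w\<bar> powr (q-1)"
  proof -
    have "\<bar>w\<bar> powr q = \<bar>w\<bar> powr (1 + (q-1))" by simp
    also have "\<dots> = \<bar>w\<bar> powr 1 * \<bar>w\<bar> powr (q-1)" by (rule powr_add)
    finally show ?thesis by simp
  qed
  have ps: "\<bar>w\<bar>/2 + c * \<bar>w\<bar> powr (q-1) \<ge> (2-q)/(2-2*q) * e"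
    using psi_ge[OF c q aw] unfolding e_def .
  have "Fq c q z w - Fq c q z 0 = w^2/2 - z*w + c * \<bar>w\<bar> powr q"
    by (rule Fq_diff_eq)
  also have "\<dots> \<ge> \<bar>w\<bar> * (\<bar>w\<bar>/2 + c * \<bar>w\<bar> powr (q-1) - \<bar>z\<bar>)"
  proof -
    have "z*w \<le> \<bar>z*w\<bar>" by (rule abs_ge_self)
    hence "- z*w \<ge> - \<bar>z\<bar> * \<bar>w\<bar>" by (simp add: abs_mult)
    moreover have "w^2 = \<bar>w\<bar>*\<bar>w\<bar>" by (simp add: power2_eq_square)
    moreover have "\<bar>w\<bar> * (\<bar>w\<bar>/2 + c * \<bar>w\<bar> powr (q-1) - \<bar>z\<bar>)
       = \<bar>w\<bar>*\<bar>w\<bar>/2 + c * (\<bar>w\<bar> * \<bar>w\<bar> powr (q-1)) - \<bar>z\<bar> * \<bar>w\<bar>"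
      by (simp add: algebra_simps)
    ultimately show ?thesis unfolding pw by linarith
  qed
  finally have "Fq c q z w - Fq c q z 0 \<ge> \<bar>w\<bar> * (\<bar>w\<bar>/2 + c * \<bar>w\<bar> powr (q-1) - \<bar>z\<bar>)" .
  moreover have "\<bar>w\<bar> * (\<bar>w\<bar>/2 + c * \<bar>w\<bar> powr (q-1) - \<bar>z\<bar>) \<ge> \<bar>w\<bar> * ((2-q)/(2-2*q) * e - \<bar>z\<bar>)"
    using ps aw by (intro mult_left_mono) auto
  ultimately show ?thesis by linarith
qed

lemma Fq_small:
  fixes c q z :: real
  assumes c: "c > 0" and q: "0 < q" "q < 1"
  defines "e \<equiv> (2*c*(1-q)) powr (1/(2-q))"
  assumes z: "\<bar>z\<bar> < (2-q)/(2-2*q) * e"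
  shows "\<exists>!v. \<forall>w. Fq c q z v \<le> Fq c q z w"
proof (rule ex1I[of _ 0])
  have pos: "Fq c q z w - Fq c q z 0 > 0" if "w \<noteq> 0" for w
  proof -
    have "Fq c q z w - Fq c q z 0 \<ge> \<bar>w\<bar> * ((2-q)/(2-2*q) * e - \<bar>z\<bar>)"
      using Fq_diff_ge[OF c q that] unfolding e_def .
    moreover have "\<bar>w\<bar> * ((2-q)/(2-2*q) * e - \<bar>z\<bar>) > 0" using that z by simp
    ultimately show ?thesis by linarith
  qed
  show "\<forall>w. Fq c q z 0 \<le> Fq c q z w"
  proof
    fix w show "Fq c q z 0 \<le> Fq c q z w" using pos[of w] by (cases "w = 0") auto
  qed
  fix v assume "\<forall>w. Fq c q z v \<le> Fq c q z w"
  hence "Fq c q z v \<le> Fq c q z 0" by blast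
  thus "v = 0" using pos[of v] by (cases "v = 0") auto
qed

lemma Fq_thresh:
  fixes c q z :: real
  assumes c: "c > 0" and q: "0 < q" "q < 1"
  defines "e \<equiv> (2*c*(1-q)) powr (1/(2-q))"
  assumes z: "\<bar>z\<bar> = (2-q)/(2-2*q) * e"
  shows "\<forall>w. Fq c q z (sgn z * e) \<le> Fq c q z w"
proof
  fix w
  note f = e_facts[OF c q, folded e_def]
  have tpos: "(2-q)/(2-2*q) * e > 0" using f(1) q by (simp add: divide_pos_pos)
  hence zn: "z \<noteq> 0" using z by auto
  have ge: "Fq c q z w \<ge> Fq c q z 0"
  proof (cases "w = 0")
    case False
    show ?thesis using Fq_diff_ge[OF c q False, of z] z unfolding e_def by simp
  qed simp
  have ae: "\<bar>sgn z * e\<bar> = e" using zn f(1) by (simp add: abs_mult)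
  have pw: "e powr q = e * e powr (q-1)"
  proof -
    have "e powr q = e powr (1 + (q-1))" by simp
    also have "\<dots> = e powr 1 * e powr (q-1)" by (rule powr_add)
    finally show ?thesis using f(1) by simp
  qed
  have s2: "(sgn z * e)^2 = e^2" using zn by (simp add: power_mult_distrib power2_eq_square sgn_mult_self_eq)
  have zs: "z * (sgn z * e) = \<bar>z\<bar> * e" using zn by (cases "z > 0") (auto simp: sgn_if)
  have "Fq c q z (sgn z * e) - Fq c q z 0 = e^2/2 - \<bar>z\<bar> * e + c * e powr q"
    unfolding Fq_diff_eq ae s2 zs ..
  also have "\<dots> = e * (e/2 + c * e powr (q-1) - \<bar>z\<bar>)"
    unfolding pw by (simp add: power2_eq_square algebra_simps)
  also have "\<dots> = 0" using psi_eq[OF c q] z unfolding e_def by simp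
  finally show "Fq c q z (sgn z * e) \<le> Fq c q z w" using ge by simp
qed

lemma rolle_pos:
  fixes f f' :: "real \<Rightarrow> real"
  assumes ab: "a < b" "0 < a" and fab: "f a = f b"
    and d: "\<And>x. x > 0 \<Longrightarrow> DERIV f x :> f' x"
  shows "\<exists>t. a < t \<and> t < b \<and> f' t = 0"
proof -
  have "continuous_on {a..b} f"
    by (rule DERIV_continuous_on[of _ _ f'], rule has_field_derivative_at_within, rule d) (use ab in auto)
  moreover have "f differentiable (at x)" if "a < x" "x < b" for x
    using d[of x] that ab unfolding real_differentiable_def by auto
  ultimately obtain t where t: "a < t" "t < b" "DERIV f t :> 0"
    using Rolle[OF ab(1) fab] by blast
  have "f' t = 0" using DERIV_unique[OF d[of t] t(3)] t ab by simp
  thus ?thesis using t by blast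
qed

lemma Fq_two_min:
  fixes c q z v1 v2 :: real
  assumes c: "c > 0" and q: "0 < q" "q < 1" and v: "0 < v1" "v1 < v2"
    and m1: "\<forall>w. Fq c q z v1 \<le> Fq c q z w" and m2: "\<forall>w. Fq c q z v2 \<le> Fq c q z w"
  shows False
proof -
  define G where "G = (\<lambda>x::real. (z-x)^2/2 + c * x powr q)"
  define H where "H = (\<lambda>x::real. x - z + c*(q * x powr (q-1)))"
  define H' where "H' = (\<lambda>x::real. 1 + c*(q*((q-1)*x powr (q-2))))"
  have dG: "DERIV G x :> H x" if "x > 0" for x
    unfolding G_def H_def using that
    by (auto intro!: derivative_eq_intros simp: algebra_simps power2_eq_square diff_divide_distrib)
  have dH: "DERIV H x :> H' x" if "x > 0" for x
  proof -
    have "q - 1 - 1 = q - 2" by simp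
    thus ?thesis unfolding H_def H'_def using that
      by (auto intro!: derivative_eq_intros simp: algebra_simps)
  qed
  have GF: "G x = Fq c q z x" if "x > 0" for x
    unfolding G_def Fq_def using that by simp
  have crit: "H u = 0" if u: "u > 0" and mu: "\<forall>w. Fq c q z u \<le> Fq c q z w" for u
  proof (rule DERIV_local_min[OF dG[OF u] u], intro allI impI)
    fix y assume "\<bar>u - y\<bar> < u"
    hence y: "y > 0" by simp
    show "G u \<le> G y" using mu GF[OF u] GF[OF y] by simp
  qed
  have h1: "H v1 = 0" using crit v m1 by simp
  have h2: "H v2 = 0" using crit v m2 by simp
  have "G v1 = G v2" using m1 m2 GF v by (metis order.antisym order.strict_trans)
  then obtain xi where xi: "v1 < xi" "xi < v2" "H xi = 0"
    using rolle_pos[OF v(2) v(1) _ dG] by blast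
  obtain e1 where e1: "v1 < e1" "e1 < xi" "H' e1 = 0"
    using rolle_pos[OF xi(1) v(1) _ dH] h1 xi by auto
  obtain e2 where e2: "xi < e2" "e2 < v2" "H' e2 = 0"
    using rolle_pos[OF xi(2) _ _ dH] h2 xi v by auto
  have "e2 powr (q-2) < e1 powr (q-2)"
    using powr_less_mono2_neg[of "q-2" e1 e2] e1 e2 v q by auto
  hence "c*(q*(1-q)) * e2 powr (q-2) < c*(q*(1-q)) * e1 powr (q-2)"
    using c q by (intro mult_strict_left_mono) auto
  moreover have "c*(q*(1-q)) * e1 powr (q-2) = 1" "c*(q*(1-q)) * e2 powr (q-2) = 1"
    using e1(3) e2(3) unfolding H'_def by (simp_all add: algebra_simps)
  ultimately show False by simp
qed

lemma Fq_large:
  fixes c q z :: real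
  assumes c: "c > 0" and q: "0 < q" "q < 1"
  defines "e \<equiv> (2*c*(1-q)) powr (1/(2-q))"
  assumes z: "z > (2-q)/(2-2*q) * e"
  shows "\<exists>!v. \<forall>w. Fq c q z v \<le> Fq c q z w"
proof -
  note f = e_facts[OF c q, folded e_def]
  have tpos: "(2-q)/(2-2*q) * e > 0" using f(1) q by (simp add: divide_pos_pos)
  hence zp: "z > 0" using z by linarith
  have cont: "continuous_on {0..2*z} (Fq c q z)"
    unfolding Fq_def using q by (intro continuous_intros continuous_on_powr') auto
  obtain u where u: "u \<in> {0..2*z}" "\<forall>y\<in>{0..2*z}. Fq c q z u \<le> Fq c q z y"
    using continuous_attains_inf[OF compact_Icc _ cont] zp by auto
  have ex: "\<forall>w. Fq c q z u \<le> Fq c q z w"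
  proof
    fix w show "Fq c q z u \<le> Fq c q z w"
    proof (cases "w \<in> {0..2*z}")
      case True thus ?thesis using u by blast
    next
      case False
      hence "\<bar>z - w\<bar> > \<bar>z\<bar>" using zp by auto
      hence "(z-w)^2 > z^2" by (metis abs_le_square_iff not_le power2_abs)
      moreover have "c * \<bar>w\<bar> powr q \<ge> 0" using c by simp
      ultimately have "Fq c q z w > Fq c q z 0" unfolding Fq_def by simp
      moreover have "Fq c q z u \<le> Fq c q z 0" using u zp by auto
      ultimately show ?thesis by simp
    qed
  qed
  have pos: "v > 0" if mv: "\<forall>w. Fq c q z v \<le> Fq c q z w" for v
  proof (rule ccontr)
    assume "\<not> v > 0"
    then consider "v = 0" | "v < 0" by linarith
    thus False
    proof cases
      case 1
      have pw: "e powr q = e * e powr (q-1)"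
      proof -
        have "e powr q = e powr (1 + (q-1))" by simp
        also have "\<dots> = e powr 1 * e powr (q-1)" by (rule powr_add)
        finally show ?thesis using f(1) by simp
      qed
      have "Fq c q z e - Fq c q z 0 = e^2/2 - z*e + c * e powr q"
        using Fq_diff_eq f(1) by simp
      also have "\<dots> = e * (e/2 + c * e powr (q-1) - z)"
        unfolding pw by (simp add: power2_eq_square algebra_simps)
      also have "\<dots> = e * ((2-q)/(2-2*q) * e - z)" using psi_eq[OF c q] unfolding e_def by simp
      also have "\<dots> < 0" using f(1) z by (simp add: mult_pos_neg)
      finally show False using mv 1 by (metis diff_less_0_iff_less not_le)
    next
      case 2
      have "(z-v)^2 - (z+v)^2 = -4*z*v" by (simp add: power2_eq_square algebra_simps)
      moreover have "-4*z*v > 0" using zp 2 by (simp add: mult_pos_neg)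
      ultimately have "(z+v)^2 < (z-v)^2" by linarith
      hence "Fq c q z (-v) < Fq c q z v" unfolding Fq_def by simp
      thus False using mv by (metis not_le)
    qed
  qed
  show ?thesis
  proof (rule ex1I[of _ u])
    show "\<forall>w. Fq c q z u \<le> Fq c q z w" by (rule ex)
    fix v assume mv: "\<forall>w. Fq c q z v \<le> Fq c q z w"
    show "v = u"
    proof (rule ccontr)
      assume "v \<noteq> u"
      then consider "v < u" | "u < v" by linarith
      thus False
        using Fq_two_min[OF c q pos[OF mv] _ mv ex] Fq_two_min[OF c q pos[OF ex] _ ex mv] by cases auto
    qed
  qed
qed

lemma Fq_neg: "Fq c q (-z) (-w) = Fq c q z w"
  unfolding Fq_def by (simp add: power2_commute)

lemma Fq_uniq:
  fixes c q z :: real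
  assumes c: "c > 0" and q: "0 < q" "q < 1"
  defines "e \<equiv> (2*c*(1-q)) powr (1/(2-q))"
  assumes z: "\<bar>z\<bar> \<noteq> (2-q)/(2-2*q) * e"
  shows "\<exists>!v. \<forall>w. Fq c q z v \<le> Fq c q z w"
proof -
  consider "\<bar>z\<bar> < (2-q)/(2-2*q) * e" | "z > (2-q)/(2-2*q) * e" | "-z > (2-q)/(2-2*q) * e"
    using z by linarith
  thus ?thesis
  proof cases
    case 1 thus ?thesis using Fq_small[OF c q] unfolding e_def by blast
  next
    case 2 thus ?thesis using Fq_large[OF c q] unfolding e_def by blast
  next
    case 3
    then obtain v where v: "\<forall>w. Fq c q (-z) v \<le> Fq c q (-z) w"
      and vu: "\<And>v'. \<forall>w. Fq c q (-z) v' \<le> Fq c q (-z) w \<Longrightarrow> v' = v"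
      using Fq_large[OF c q, of "-z"] unfolding e_def by blast
    show ?thesis
    proof (rule ex1I[of _ "-v"])
      show "\<forall>w. Fq c q z (-v) \<le> Fq c q z w"
      proof
        fix w show "Fq c q z (-v) \<le> Fq c q z w"
          using v[rule_format, of "-w"] Fq_neg[of c q "-z" v] Fq_neg[of c q "-z" "-w"] by simp
      qed
    next
      fix v' assume a: "\<forall>w. Fq c q z v' \<le> Fq c q z w"
      have "\<forall>w. Fq c q (-z) (-v') \<le> Fq c q (-z) w"
      proof
        fix w show "Fq c q (-z) (-v') \<le> Fq c q (-z) w"
          using a[rule_format, of "-w"] Fq_neg[of c q z v'] Fq_neg[of c q z "-w"] by simp
      qed
      thus "v' = -v" using vu by fastforce
    qed
  qed
qed

lemma prox_eq:
  assumes mu: "mu > 0"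
  shows "prox mu lam q z = {v. \<forall>w. Fq (lam*mu) q z v \<le> Fq (lam*mu) q z w}"
proof -
  have eq: "(z - v)^2 / (2*mu) + lam * \<bar>v\<bar> powr q = Fq (lam*mu) q z v / mu" for v
    unfolding Fq_def using mu by (simp add: add_divide_distrib)
  show ?thesis unfolding prox_def eq using mu by (simp add: divide_le_cancel)
qed

lemma Tmap_good:
  fixes mu lam q z w :: real
  assumes mu: "mu > 0" and lam: "lam > 0" and q: "0 < q" "q < 1"
  shows "(z - Tmap mu lam q z w)^2 / (2*mu) + lam * \<bar>Tmap mu lam q z w\<bar> powr q
       \<le> (z - w)^2 / (2*mu) + lam * \<bar>w\<bar> powr q"
proof -
  have c: "lam * mu > 0" using mu lam by simp
  define e where "e = (2*(lam*mu)*(1-q)) powr (1/(2-q))"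
  have te: "tau mu lam q = (2-q)/(2-2*q) * e" and ee: "eta mu lam q = e"
    unfolding tau_def eta_def e_def by (simp_all add: mult.assoc)
  have inprox: "Tmap mu lam q z w \<in> prox mu lam q z \<or> Tmap mu lam q z w = w"
  proof (cases "\<bar>z\<bar> = tau mu lam q")
    case False
    have "\<exists>!v. v \<in> prox mu lam q z"
      unfolding prox_eq[OF mu] using Fq_uniq[OF c q, of z] False unfolding te e_def by simp
    hence "(THE v. v \<in> prox mu lam q z) \<in> prox mu lam q z" by (rule theI')
    thus ?thesis using False unfolding Tmap_def by simp
  next
    case zt: True
    show ?thesis
    proof (cases "w = 0")
      case True thus ?thesis using zt unfolding Tmap_def by simp
    next
      case False
      have "sgn z * e \<in> prox mu lam q z"
        unfolding prox_eq[OF mu] using Fq_thresh[OF c q, of z] \<open>\<bar>z\<bar> = tau mu lam q\<close> unfolding te e_def by simp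
      thus ?thesis using zt False unfolding Tmap_def ee by simp
    qed
  qed
  thus ?thesis unfolding prox_def by auto
qed

lemma sum_upd:
  fixes f :: "nat \<Rightarrow> real"
  assumes i: "i < N"
  shows "(\<Sum>j<N. f j + (if j = i then d else 0)) = (\<Sum>j<N. f j) + d"
  using i by (simp add: sum.distrib)

lemma Amul_upd:
  assumes i: "i < N"
  shows "Amul A m N (x(i:=v)) r = Amul A m N x r + A r i * (v - x i)"
proof -
  have "(\<Sum>j<N. A r j * (x(i:=v)) j) = (\<Sum>j<N. A r j * x j + (if j = i then A r i * (v - x i) else 0))"
    by (rule sum.cong) (auto simp: algebra_simps)
  thus ?thesis unfolding Amul_def using sum_upd[OF i] by simp
qed

lemma reg_upd:
  fixes x :: "nat \<Rightarrow> real"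
  assumes i: "i < N"
  shows "(\<Sum>j<N. \<bar>(x(i:=v)) j\<bar> powr q) = (\<Sum>j<N. \<bar>x j\<bar> powr q) + (\<bar>v\<bar> powr q - \<bar>x i\<bar> powr q)"
proof -
  have "(\<Sum>j<N. \<bar>(x(i:=v)) j\<bar> powr q) = (\<Sum>j<N. \<bar>x j\<bar> powr q + (if j = i then \<bar>v\<bar> powr q - \<bar>x i\<bar> powr q else 0))"
    by (rule sum.cong) auto
  thus ?thesis using sum_upd[OF i] by simp
qed

lemma Tlam_upd:
  assumes i: "i < N"
  shows "Tlam A y lam q m N (x(i:=v)) = Tlam A y lam q m N x + gradc A y m N x i * (v - x i)
     + colnorm2 A m i * (v - x i)^2 / 2 + lam * (\<bar>v\<bar> powr q - \<bar>x i\<bar> powr q)"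
proof -
  define d where "d = v - x i"
  define R where "R = (\<lambda>r. Amul A m N x r - y r)"
  have "(\<Sum>r<m. (Amul A m N (x(i:=v)) r - y r)^2) = (\<Sum>r<m. (R r + A r i * d)^2)"
    unfolding Amul_upd[OF i] R_def d_def by (simp add: algebra_simps)
  also have "\<dots> = (\<Sum>r<m. R r ^2 + 2 * d * (A r i * R r) + d^2 * (A r i)^2)"
    by (rule sum.cong) (simp_all add: power2_eq_square algebra_simps)
  also have "\<dots> = (\<Sum>r<m. R r ^2) + 2 * d * (\<Sum>r<m. A r i * R r) + d^2 * (\<Sum>r<m. (A r i)^2)"
    by (simp add: sum.distrib sum_distrib_left)
  finally have q: "(\<Sum>r<m. (Amul A m N (x(i:=v)) r - y r)^2) =
     (\<Sum>r<m. R r ^2) + 2 * d * gradc A y m N x i + d^2 * colnorm2 A m i"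
    unfolding gradc_def colnorm2_def R_def .
  show ?thesis unfolding Tlam_def q reg_upd[OF i] by (simp add: R_def d_def algebra_simps)
qed

theorem lemma2:
  fixes A :: "nat \<Rightarrow> nat \<Rightarrow> real" and y x0 :: "nat \<Rightarrow> real"
    and lam q mu :: real and m N n :: nat
  assumes "N \<ge> 1"
    and "lam > 0" and "0 < q" and "q < 1"
    and "0 < mu" and "mu * Lmax A m N < 1"
  shows "(Tlam A y lam q m N (gaita A y lam q mu m N x0 n)
            - Tlam A y lam q m N (gaita A y lam q mu m N x0 (Suc n)) = 0)
         \<longleftrightarrow> gaita A y lam q mu m N x0 (Suc n) (n mod N) = gaita A y lam q mu m N x0 n (n mod N)"
proof -
  note N = assms(1) and lam = assms(2) and q = assms(3,4) and mu = assms(5) and L = assms(6)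
  define x where "x = gaita A y lam q mu m N x0 n"
  define i where "i = n mod N"
  define g where "g = gradc A y m N x i"
  define z where "z = x i - mu * g"
  define v where "v = Tmap mu lam q z (x i)"
  define d where "d = v - x i"
  define a where "a = colnorm2 A m i"
  define P where "P = lam * (\<bar>v\<bar> powr q - \<bar>x i\<bar> powr q)"
  have i: "i < N" unfolding i_def using N by simp
  have xs: "gaita A y lam q mu m N x0 (Suc n) = x(i := v)"
    unfolding x_def i_def v_def z_def g_def by (simp add: Let_def)
  have a0: "a \<ge> 0" unfolding a_def colnorm2_def by (simp add: sum_nonneg)
  have aL: "a \<le> Lmax A m N" unfolding a_def Lmax_def
    by (rule Max_ge) (use i in auto)
  have "mu * a \<le> mu * Lmax A m N" using mult_left_mono[OF aL, of mu] mu by simp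
  hence mua: "mu * a < 1" using L by linarith
  have T: "Tlam A y lam q m N (x(i:=v)) = Tlam A y lam q m N x + g * d + a * d^2/2 + P"
    using Tlam_upd[OF i, of A y lam q m x v] unfolding g_def d_def a_def P_def by simp
  have good: "(z - v)^2 / (2*mu) + lam * \<bar>v\<bar> powr q \<le> (z - x i)^2 / (2*mu) + lam * \<bar>x i\<bar> powr q"
    unfolding v_def by (rule Tmap_good[OF mu lam q])
  have sq: "(z - v)^2 - (z - x i)^2 = d^2 + 2*mu*g*d"
    unfolding z_def d_def by (simp add: power2_eq_square algebra_simps)
  have "(z - v)^2 / (2*mu) - (z - x i)^2 / (2*mu) = (d^2 + 2*mu*g*d) / (2*mu)"
    unfolding sq[symmetric] by (simp add: diff_divide_distrib)
  also have "\<dots> = d^2/(2*mu) + g*d" using mu by (simp add: add_divide_distrib)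
  finally have ph: "d^2/(2*mu) + g*d + P \<le> 0" using good unfolding P_def by (simp add: algebra_simps)
  have "d^2/(2*mu) - a*d^2/2 = d^2 * ((1 - mu*a)/(2*mu))" using mu by (simp add: field_simps)
  hence Delta: "Tlam A y lam q m N x - Tlam A y lam q m N (x(i:=v)) \<ge> d^2 * ((1 - mu*a)/(2*mu))"
    using T ph by linarith
  have fpos: "(1 - mu*a)/(2*mu) > 0" using mua mu by simp
  show ?thesis unfolding xs[folded x_def] i_def[symmetric] x_def[symmetric]
  proof
    assume "Tlam A y lam q m N x - Tlam A y lam q m N (x(i:=v)) = 0"
    hence "d^2 * ((1 - mu*a)/(2*mu)) \<le> 0" using Delta by simp
    hence "d^2 \<le> 0" using fpos by (metis mult_le_0_iff not_le zero_le_power2 order.antisym)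
    hence "d = 0" by simp
    thus "(x(i:=v)) i = x i" unfolding d_def by simp
  next
    assume "(x(i:=v)) i = x i"
    hence "x(i:=v) = x" by auto
    thus "Tlam A y lam q m N x - Tlam A y lam q m N (x(i:=v)) = 0" by simp
  qed
qed

end
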